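(* Let $\mathbb{T}(n,p)$ denote the expected number of explored nodes of the branch-and-bound algorithm for minimum dominating set described in the context, run on $G\sim\mathcal{G}(n,p)$. Then: (a) If $p=p(n)$ satisfies $pn\to\infty$ as $n\to\infty$, then $\mathbb{T}(n,p)=2^{o(n)}$ (the algorithm takes subexponential time on average). (b) If $p=c/n$ where $c\ge 20$ is a constant, then there is a constant $\epsilon\ge 0.01$ (independent of $n$) such that $\mathbb{T}(n,p)\le (2-\epsilon)^n$ for all sufficiently large $n$.
   Context: $\mathcal{G}(n,p)$ is the binomial random graph on vertex set $V=\{v_1,\dots,v_n\}$ in which each of the $\binom n2$ possible edges is present independently with probability $p$. A set $S\subseteq V$ is dominating if every vertex is in $S$ or adjacent to a vertex of $S$. Branch-and-bound algorithm: fix the order $v_1,\dots,v_n$. Nodes of the search tree are pairs $(\vec x,\delta)$ with $\delta\in\{0,\dots,n\}$ and $\vec x\in\{0,1\}^n$ with $x_i=1$ for all $i>\delta$; the node represents the vertex set $\{v_i: x_i=1\}$. The root is $((1,\dots,1),0)$. A node $(\vec x,\delta)$ with $\delta<n$ has a left child $(\vec x,\delta+1)$ (i.e. $x_{\delta+1}=1$, vertex $v_{\delta+1}$ kept) and a right child $(\vec x',\delta+1)$ where $\vec x'$ equals $\vec x$ except $x'_{\delta+1}=0$ (vertex $v_{\delta+1}$ removed). A node is feasible if its vertex set is a dominating set of $G$. The score of a node is $u(\vec x,\delta)=|\vec x|-n+\delta$, where $|\vec x|=\sum_i x_i$; equivalently, the number of indices $i\le\delta$ with $x_i=1$. Initially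 the root is explored. At each step, among the feasible nodes that are children of already-explored nodes and have not yet been explored, one with minimum score is explored (ties broken arbitrarily). The algorithm stops as soon as a node of depth $\delta=n$ is explored; its vertex set is returned as a minimum dominating set. The complexity is the number of explored nodes. *)

theory Defs
  imports Complex_Main "HOL-Library.Landau_Symbols"
begin

text \<open>Vertices v_1..v_n are represented by 0..n-1 (v_(i+1) is i).
  A graph on {0..<n} is a set E of 2-element subsets of {0..<n}.\<close>

definition all_pairs :: "nat \<Rightarrow> nat set set" where
  "all_pairs n = {{i, j} | i j. i < j \<and> j < n}"

definition dominating :: "nat \<Rightarrow> nat set set \<Rightarrow> nat set \<Rightarrow> bool" where
  "dominating n E S \<longleftrightarrow> S \<subseteq> {..<n} \<and> (\<forall>v<n. v \<in> S \<or> (\<exists>u\<in>S. {u, v} \<in> E))"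

text \<open>A node (S, d): S is the represented vertex set (the i with x_(i+1) = 1),
  d is the depth delta.  Vertices with index \<ge> d are always in S.\<close>
type_synonym node = "nat set \<times> nat"

definition root :: "nat \<Rightarrow> node" where
  "root n = ({..<n}, 0)"

definition children :: "nat \<Rightarrow> node \<Rightarrow> node set" where
  "children n a = (if snd a < n then {(fst a, Suc (snd a)), (fst a - {snd a}, Suc (snd a))} else {})"

definition score :: "node \<Rightarrow> nat" where
  "score a = card (fst a \<inter> {..<snd a})"

definition candidates :: "nat \<Rightarrow> nat set set \<Rightarrow> node list \<Rightarrow> node set" where
  "candidates n E xs = {c. (\<exists>a\<in>set xs. c \<in> children n a) \<and> dominating n E (fst c) \<and> c \<notin> set xs}"

text \<open>A complete run of the branch-and-bound algorithm (with some tie-breaking):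
  the list of explored nodes in order of exploration.\<close>
definition valid_run :: "nat \<Rightarrow> nat set set \<Rightarrow> node list \<Rightarrow> bool" where
  "valid_run n E xs \<longleftrightarrow> xs \<noteq> [] \<and> hd xs = root n \<and>
     (\<forall>i. 0 < i \<and> i < length xs \<longrightarrow>
        xs ! i \<in> candidates n E (take i xs) \<and>
        (\<forall>c \<in> candidates n E (take i xs). score (xs ! i) \<le> score c)) \<and>
     snd (last xs) = n \<and>
     (\<forall>i. i + 1 < length xs \<longrightarrow> snd (xs ! i) \<noteq> n)"

definition complexity :: "nat \<Rightarrow> nat set set \<Rightarrow> nat" where
  "complexity n E = Max {length xs | xs. valid_run n E xs}"

definition T :: "nat \<Rightarrow> real \<Rightarrow> real" where
  "T n p = (\<Sum>E \<in> Pow (all_pairs n).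
      p ^ card E * (1 - p) ^ (card (all_pairs n) - card E) * real (complexity n E))"

end

theory Submission
  imports Defs "HOL-Real_Asymp.Real_Asymp"
begin


definition prun :: "nat \<Rightarrow> nat set set \<Rightarrow> node list \<Rightarrow> bool" where
  "prun n E xs \<longleftrightarrow> xs \<noteq> [] \<and> hd xs = root n \<and>
     (\<forall>i. 0 < i \<and> i < length xs \<longrightarrow>
        xs ! i \<in> candidates n E (take i xs) \<and>
        (\<forall>c \<in> candidates n E (take i xs). score (xs ! i) \<le> score c)) \<and>
     (\<forall>i. i + 1 < length xs \<longrightarrow> snd (xs ! i) \<noteq> n)"

lemma valid_run_prun: "valid_run n E xs \<longleftrightarrow> prun n E xs \<and> snd (last xs) = n"
  unfolding valid_run_def prun_def by blast

definition good :: "nat \<Rightarrow> node \<Rightarrow> bool" where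
  "good n a \<longleftrightarrow> snd a \<le> n \<and> {snd a..<n} \<subseteq> fst a \<and> fst a \<subseteq> {..<n}"

lemma dominating_mono:
  "dominating n E D \<Longrightarrow> D \<subseteq> S \<Longrightarrow> S \<subseteq> {..<n} \<Longrightarrow> dominating n E S"
  unfolding dominating_def by blast

lemma children_good: "good n a \<Longrightarrow> c \<in> children n a \<Longrightarrow> good n c"
  unfolding good_def children_def
  by (auto split: if_splits simp: subset_iff)

lemma exists_step:
  assumes "Q (0::nat)" "\<not> Q n"
  shows "\<exists>d<n. Q d \<and> \<not> Q (Suc d)"
  using assms
proof (induction n)
  case 0 then show ?case by simp
next
  case (Suc n)
  show ?case
  proof (cases "Q n")
    case True then show ?thesis using Suc.prems by auto
  next
    case False then show ?thesis using Suc by (metis less_Suc_eq)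
  qed
qed

lemma cand_exists:
  assumes "root n \<in> set ys" "(D, n) \<notin> set ys" "dominating n E D"
  shows "\<exists>c\<in>candidates n E ys. score c \<le> card D"
proof -
  define anc where "anc d = (D \<union> {d..<n}, d)" for d
  have Dn: "D \<subseteq> {..<n}" using assms(3) unfolding dominating_def by auto
  have "anc 0 = root n" unfolding anc_def root_def using Dn by auto
  then have q0: "anc 0 \<in> set ys" using assms(1) by simp
  have qn: "anc n \<notin> set ys" unfolding anc_def using assms(2) by simp
  obtain d where d: "d < n" "anc d \<in> set ys" "anc (Suc d) \<notin> set ys"
    using exists_step[of "\<lambda>d. anc d \<in> set ys" n] q0 qn by blast
  have ch: "anc (Suc d) \<in> children n (anc d)"
  proof (cases "d \<in> D")
    case True
    have "D \<union> {Suc d..<n} = D \<union> {d..<n}"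
    proof (intro set_eqI)
      fix x show "x \<in> D \<union> {Suc d..<n} \<longleftrightarrow> x \<in> D \<union> {d..<n}"
        using True d(1) by (cases "x = d") auto
    qed
    then show ?thesis unfolding anc_def children_def using d(1) by auto
  next
    case False
    then have "D \<union> {Suc d..<n} = D \<union> {d..<n} - {d}" using d(1) by auto
    then show ?thesis unfolding anc_def children_def using d(1) by auto
  qed
  have dom: "dominating n E (fst (anc (Suc d)))"
    unfolding anc_def by (rule dominating_mono[OF assms(3)]) (use Dn in auto)
  have "anc (Suc d) \<in> candidates n E ys"
    unfolding candidates_def using ch dom d by blast
  moreover have "score (anc (Suc d)) \<le> card D"
  proof -
    have "fst (anc (Suc d)) \<inter> {..<snd (anc (Suc d))} = D \<inter> {..<Suc d}"
      unfolding anc_def by auto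
    moreover have "finite D" using Dn finite_subset by blast
    ultimately show ?thesis unfolding score_def by (simp add: card_mono)
  qed
  ultimately show ?thesis by blast
qed

lemma prun_good:
  assumes "prun n E xs"
  shows "i < length xs \<Longrightarrow> good n (xs ! i)"
proof (induction i rule: less_induct)
  case (less i)
  show ?case
  proof (cases "i = 0")
    case True
    then have "xs ! i = root n" using assms unfolding prun_def by (metis hd_conv_nth)
    then show ?thesis unfolding good_def root_def by auto
  next
    case False
    then have "xs ! i \<in> candidates n E (take i xs)" using assms less.prems unfolding prun_def by auto
    then obtain a where a: "a \<in> set (take i xs)" "xs ! i \<in> children n a"
      unfolding candidates_def by auto
    then obtain j where j: "j < i" "a = xs ! j" using less.prems
      by (auto simp: in_set_conv_nth)
    then have "good n a" using less.IH less.prems by auto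
    then show ?thesis using children_good a by blast
  qed
qed

lemma prun_no_n:
  assumes "prun n E xs" "i < length xs" "j < i"
  shows "snd (xs ! j) \<noteq> n"
  using assms unfolding prun_def by auto

lemma prun_score:
  assumes "prun n E xs" "dominating n E D" "i < length xs"
  shows "score (xs ! i) \<le> card D"
proof (cases "i = 0")
  case True
  then have "xs ! i = root n" using assms unfolding prun_def by (metis hd_conv_nth)
  then show ?thesis unfolding score_def root_def by simp
next
  case False
  have "root n \<in> set (take i xs)"
    using assms False unfolding prun_def
    by (metis hd_conv_nth hd_in_set hd_take take_eq_Nil2 gr0I)
  moreover have "(D, n) \<notin> set (take i xs)"
  proof
    assume "(D, n) \<in> set (take i xs)"
    then obtain j where "j < i" "xs ! j = (D, n)" using assms(3)
      by (auto simp: in_set_conv_nth)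
    then show False using prun_no_n[OF assms(1,3)] by fastforce
  qed
  ultimately obtain c where c: "c \<in> candidates n E (take i xs)" "score c \<le> card D"
    using cand_exists assms(2) by blast
  have "score (xs ! i) \<le> score c" using assms(1,3) False c(1) unfolding prun_def by auto
  then show ?thesis using c(2) by linarith
qed

lemma prun_distinct:
  assumes "prun n E xs"
  shows "distinct xs"
proof -
  have "xs ! i \<noteq> xs ! j" if "i < length xs" "j < i" for i j
  proof -
    have "xs ! i \<notin> set (take i xs)" using assms that unfolding prun_def candidates_def by auto
    moreover have "xs ! j \<in> set (take i xs)"
    proof -
      have "take i xs ! j = xs ! j" using that by simp
      moreover have "j < length (take i xs)" using that by simp
      ultimately show ?thesis by (metis nth_mem)
    qed
    ultimately show ?thesis by auto
  qed
  then have *: "\<And>i j. i < length xs \<Longrightarrow> j < i \<Longrightarrow> xs ! i \<noteq> xs ! j" by blast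
  show ?thesis unfolding distinct_conv_nth
  proof (intro allI impI)
    fix i j assume ij: "i < length xs" "j < length xs" "i \<noteq> j"
    show "xs ! i \<noteq> xs ! j"
    proof (cases "j < i")
      case True then show ?thesis using *[OF ij(1)] by blast
    next
      case False then have "i < j" using ij by simp
      then show ?thesis using *[OF ij(2)] by metis
    qed
  qed
qed

lemma prun_len:
  assumes "prun n E xs" "dominating n E D"
  shows "length xs \<le> card {B. B \<subseteq> {..<n} \<and> card B \<le> card D} * (n + 1)"
proof -
  define BS where "BS = {B. B \<subseteq> {..<n} \<and> card B \<le> card D}"
  have sub: "set xs \<subseteq> (\<lambda>(B, d). (B \<union> {d..<n}, d)) ` (BS \<times> {..n})"
  proof
    fix a assume "a \<in> set xs"
    then obtain i where i: "i < length xs" "a = xs ! i" by (auto simp: in_set_conv_nth)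
    have g: "good n a" using prun_good[OF assms(1) i(1)] i by simp
    have s: "score a \<le> card D" using prun_score[OF assms i(1)] i by simp
    obtain S d where a: "a = (S, d)" by fastforce
    have "S = (S \<inter> {..<d}) \<union> {d..<n}" using g a unfolding good_def by auto
    moreover have "S \<inter> {..<d} \<in> BS" using g s a unfolding good_def BS_def score_def by auto
    moreover have "d \<in> {..n}" using g a unfolding good_def by auto
    ultimately show "a \<in> (\<lambda>(B, d). (B \<union> {d..<n}, d)) ` (BS \<times> {..n})"
      using a by (auto intro!: image_eqI[where x="(S \<inter> {..<d}, d)"])
  qed
  have fin: "finite BS" unfolding BS_def by auto
  have "length xs = card (set xs)" using prun_distinct[OF assms(1)] by (simp add: distinct_card)
  also have "\<dots> \<le> card ((\<lambda>(B, d). (B \<union> {d..<n}, d)) ` (BS \<times> {..n}))"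
    using sub fin by (intro card_mono) auto
  also have "\<dots> \<le> card (BS \<times> {..n})" by (rule card_image_le) (use fin in auto)
  also have "\<dots> = card BS * (n + 1)" by (simp add: card_cartesian_product)
  finally show ?thesis by (simp add: BS_def)
qed

lemma prun_extend:
  assumes "prun n E xs" "snd (last xs) \<noteq> n"
  shows "\<exists>c. prun n E (xs @ [c])"
proof -
  have ne: "xs \<noteq> []" using assms unfolding prun_def by auto
  have "root n \<in> set xs" using assms ne hd_in_set[OF ne] unfolding prun_def by auto
  moreover have "({..<n}, n) \<notin> set xs"
  proof
    assume "({..<n}, n) \<in> set xs"
    then obtain j where j: "j < length xs" "xs ! j = ({..<n}, n)" by (auto simp: in_set_conv_nth)
    show False
    proof (cases "j + 1 < length xs")
      case True then show False using assms(1) j unfolding prun_def by auto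
    next
      case False
      then have "j = length xs - 1" using j by auto
      then show False using j assms(2) ne by (simp add: last_conv_nth)
    qed
  qed
  moreover have "dominating n E {..<n}" unfolding dominating_def by auto
  ultimately obtain c0 where "c0 \<in> candidates n E xs" using cand_exists by blast
  define c where "c = arg_min score (\<lambda>c. c \<in> candidates n E xs)"
  have c: "c \<in> candidates n E xs" "\<forall>y\<in>candidates n E xs. score c \<le> score y"
    using arg_min_nat_lemma[of "\<lambda>c. c \<in> candidates n E xs" c0 score] \<open>c0 \<in> _\<close>
    unfolding c_def by auto
  have A: "\<forall>i. 0 < i \<and> i < length (xs @ [c]) \<longrightarrow> (xs @ [c]) ! i \<in> candidates n E (take i (xs @ [c])) \<and>
        (\<forall>c'\<in>candidates n E (take i (xs @ [c])). score ((xs @ [c]) ! i) \<le> score c')"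
  proof (intro allI impI)
    fix i assume i: "0 < i \<and> i < length (xs @ [c])"
    show "(xs @ [c]) ! i \<in> candidates n E (take i (xs @ [c])) \<and>
        (\<forall>c'\<in>candidates n E (take i (xs @ [c])). score ((xs @ [c]) ! i) \<le> score c')"
    proof (cases "i < length xs")
      case True
      then show ?thesis using assms(1) i unfolding prun_def by (simp add: nth_append)
    next
      case False
      then have "i = length xs" using i by simp
      then show ?thesis using c by simp
    qed
  qed
  have B: "\<forall>i. i + 1 < length (xs @ [c]) \<longrightarrow> snd ((xs @ [c]) ! i) \<noteq> n"
  proof (intro allI impI)
    fix i assume i: "i + 1 < length (xs @ [c])"
    show "snd ((xs @ [c]) ! i) \<noteq> n"
    proof (cases "i + 1 < length xs")
      case True
      then show ?thesis using assms(1) unfolding prun_def by (simp add: nth_append)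
    next
      case False
      then have "i = length xs - 1" using i by simp
      then show ?thesis using assms(2) ne by (simp add: nth_append last_conv_nth)
    qed
  qed
  have "prun n E (xs @ [c])"
    unfolding prun_def using A B ne assms(1) unfolding prun_def by simp
  then show ?thesis by blast
qed

lemma prun_root: "prun n E [root n]"
  unfolding prun_def by auto

lemma valid_run_exists: "\<exists>xs. valid_run n E xs"
proof -
  define B where "B = card {B. B \<subseteq> {..<n} \<and> card B \<le> card {..<n}} * (n + 1)"
  have dom: "dominating n E {..<n}" unfolding dominating_def by auto
  have "prun n E xs \<Longrightarrow> \<exists>ys. valid_run n E ys" for xs
  proof (induction "B - length xs" arbitrary: xs rule: less_induct)
    case less
    show ?case
    proof (cases "snd (last xs) = n")
      case True then show ?thesis using less.prems valid_run_prun by blast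
    next
      case False
      then obtain c where c: "prun n E (xs @ [c])" using prun_extend less.prems by blast
      have "length (xs @ [c]) \<le> B" using prun_len[OF c dom] unfolding B_def by simp
      then have "B - length (xs @ [c]) < B - length xs" by simp
      then show ?thesis using less.hyps c by blast
    qed
  qed
  then show ?thesis using prun_root by blast
qed

lemma complexity_bounds:
  assumes "dominating n E D"
  shows "1 \<le> complexity n E"
    "complexity n E \<le> card {B. B \<subseteq> {..<n} \<and> card B \<le> card D} * (n + 1)"
proof -
  define L where "L = {length xs | xs. valid_run n E xs}"
  have bd: "\<forall>l\<in>L. l \<le> card {B. B \<subseteq> {..<n} \<and> card B \<le> card D} * (n + 1)"
    unfolding L_def using prun_len assms valid_run_prun by blast
  have fin: "finite L" using bd finite_nat_set_iff_bounded_le by blast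
  obtain xs where xs: "valid_run n E xs" using valid_run_exists by blast
  have "length xs \<in> L" unfolding L_def using xs by blast
  moreover have "1 \<le> length xs" using xs unfolding valid_run_def by (cases xs) auto
  have m: "length xs \<le> Max L" by (rule Max_ge[OF fin]) fact
  have "complexity n E = Max L" unfolding complexity_def L_def by simp
  then show "1 \<le> complexity n E" using m \<open>1 \<le> length xs\<close> by linarith
  have "Max L \<le> card {B. B \<subseteq> {..<n} \<and> card B \<le> card D} * (n + 1)"
    by (rule Max.boundedI[OF fin]) (use \<open>length xs \<in> L\<close> bd in auto)
  then show "complexity n E \<le> card {B. B \<subseteq> {..<n} \<and> card B \<le> card D} * (n + 1)"
    using \<open>complexity n E = Max L\<close> by simp
qed



lemma pow_sum:
  assumes "finite A"
  shows "(\<Sum>B\<in>Pow A. (y::real) ^ card B) = (1 + y) ^ card A"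
proof -
  have "(\<Prod>a\<in>A. (\<lambda>_. y) a + (\<lambda>_. 1) a) = (\<Sum>X\<in>Pow A. prod (\<lambda>_. y) X * prod (\<lambda>_. 1) (A - X))"
    by (rule prod_add[OF assms])
  then show ?thesis by (simp add: add.commute)
qed

lemma prob_avoid:
  assumes "finite P" "F \<subseteq> P"
  shows "(\<Sum>E\<in>Pow P. (p::real) ^ card E * (1 - p) ^ (card P - card E) *
            (if E \<inter> F = {} then 1 else 0)) = (1 - p) ^ card F"
proof -
  define f1 where "f1 x = (if x \<in> F then 0 else p)" for x
  have fin: "finite F" using assms finite_subset by blast
  have "(\<Prod>x\<in>P. f1 x + (\<lambda>_. 1 - p) x) = (\<Sum>X\<in>Pow P. prod f1 X * prod (\<lambda>_. 1 - p) (P - X))"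
    by (rule prod_add[OF assms(1)])
  moreover have "(\<Prod>x\<in>P. f1 x + (\<lambda>_. 1 - p) x) = (1 - p) ^ card F"
  proof -
    have "(\<Prod>x\<in>P. f1 x + (\<lambda>_. 1 - p) x) = (\<Prod>x\<in>P. if x \<in> F then 1 - p else 1)"
      unfolding f1_def by (intro prod.cong) auto
    also have "\<dots> = prod (\<lambda>_. 1 - p) (P \<inter> {x. x \<in> F}) * prod (\<lambda>_. 1) (P \<inter> - {x. x \<in> F})"
      by (rule prod.If_cases[OF assms(1)])
    also have "P \<inter> {x. x \<in> F} = F" using assms(2) by auto
    finally show ?thesis by simp
  qed
  moreover have "prod f1 X * prod (\<lambda>_. 1 - p) (P - X) =
      p ^ card X * (1 - p) ^ (card P - card X) * (if X \<inter> F = {} then 1 else 0)" if "X \<in> Pow P" for X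
  proof -
    have finX: "finite X" using that assms(1) finite_subset by auto
    have c: "card (P - X) = card P - card X" using that finX by (simp add: card_Diff_subset)
    show ?thesis
    proof (cases "X \<inter> F = {}")
      case True
      then have "prod f1 X = prod (\<lambda>_. p) X" unfolding f1_def by (intro prod.cong) auto
      then show ?thesis using True c by simp
    next
      case False
      then obtain z where "z \<in> X" "z \<in> F" by auto
      then have "prod f1 X = 0" using finX unfolding f1_def by (auto intro!: prod_zero)
      then show ?thesis using False by simp
    qed
  qed
  ultimately show ?thesis by (metis (no_types, lifting) sum.cong)
qed

lemma card_small_sets:
  assumes "0 < x" "x \<le> (1::real)"
  shows "real (card {B. B \<subseteq> {..<n} \<and> card B \<le> k}) \<le> (1 + x) ^ n * (1 / x) ^ k"
proof -
  define BS where "BS = {B. B \<subseteq> {..<n} \<and> card B \<le> k}"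
  have fin: "finite BS" unfolding BS_def by auto
  have "real (card BS) * x ^ k = (\<Sum>B\<in>BS. x ^ k)" by simp
  also have "\<dots> \<le> (\<Sum>B\<in>BS. x ^ card B)"
    by (intro sum_mono power_decreasing) (use assms in \<open>auto simp: BS_def\<close>)
  also have "\<dots> \<le> (\<Sum>B\<in>Pow {..<n}. x ^ card B)"
    by (intro sum_mono2) (use assms in \<open>auto simp: BS_def\<close>)
  also have "\<dots> = (1 + x) ^ n" using pow_sum[of "{..<n}" x] by simp
  finally have "real (card BS) * x ^ k \<le> (1 + x) ^ n" .
  then have "real (card BS) \<le> (1 + x) ^ n / x ^ k" using assms by (simp add: field_simps)
  then show ?thesis unfolding BS_def by (simp add: power_one_over divide_inverse power_inverse)
qed

lemma T_bound:
  fixes p x :: real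
  assumes p: "0 \<le> p" "p \<le> 1" and x: "0 < x" "x \<le> 1" and mn: "m \<le> n"
  shows "T n p \<le> (real n + 1) * (1 + x) ^ n * (1 / x) ^ m * (1 + (1 / x - 1) * (1 - p) ^ m) ^ (n - m)"
proof -
  define AP where "AP = all_pairs n"
  define w where "w E = p ^ card E * (1 - p) ^ (card AP - card E)" for E :: "nat set set"
  define U where "U E = {v \<in> {m..<n}. \<forall>u<m. {u, v} \<notin> E}" for E :: "nat set set"
  define M where "M = {m..<n}"
  define F where "F W = (\<lambda>(u, v). {u, v}) ` ({..<m} \<times> W)" for W :: "nat set"
  define y where "y = 1 / x - 1"
  define C where "C = (real n + 1) * (1 + x) ^ n * (1 / x) ^ m"
  define ind where "ind E W = (if E \<inter> F W = {} then 1 else (0::real))" for E W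
  have y0: "0 \<le> y" using x unfolding y_def by (simp add: field_simps)
  have finAP: "finite AP" unfolding AP_def all_pairs_def
  proof -
    have "{{i, j} |i j. i < j \<and> j < n} \<subseteq> (\<lambda>(i, j). {i, j}) ` ({..<n} \<times> {..<n})" by auto
    then show "finite {{i, j} |i j. i < j \<and> j < n}" by (rule finite_subset) simp
  qed
  have w0: "0 \<le> w E" for E unfolding w_def using p by simp
  have comp: "real (complexity n E) \<le> C * (\<Sum>W\<in>Pow M. y ^ card W * ind E W)" for E
  proof -
    define D where "D = {..<m} \<union> U E"
    have dom: "dominating n E D" unfolding dominating_def D_def U_def using mn by auto
    have finU: "finite (U E)" unfolding U_def by auto
    have kD: "card D \<le> m + card (U E)" unfolding D_def using card_Un_le[of "{..<m}" "U E"] by simp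
    have "real (complexity n E) \<le> real (card {B. B \<subseteq> {..<n} \<and> card B \<le> card D}) * (real n + 1)"
      using complexity_bounds(2)[OF dom] by (metis of_nat_Suc of_nat_le_iff of_nat_mult Suc_eq_plus1 add.commute)
    also have "\<dots> \<le> (1 + x) ^ n * (1 / x) ^ card D * (real n + 1)"
      by (intro mult_right_mono card_small_sets x) auto
    also have "(1 / x) ^ card D \<le> (1 / x) ^ (m + card (U E))"
      by (intro power_increasing kD) (use x in auto)
    also have "(1 / x) ^ (m + card (U E)) = (1 / x) ^ m * (1 + y) ^ card (U E)"
      unfolding y_def by (simp add: power_add)
    also have "(1 + y) ^ card (U E) = (\<Sum>W\<in>Pow (U E). y ^ card W)" using pow_sum[OF finU] by simp
    also have "\<dots> = (\<Sum>W\<in>Pow M. y ^ card W * ind E W)"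
    proof -
      have "(\<Sum>W\<in>Pow M. y ^ card W * ind E W) = (\<Sum>W\<in>Pow M. if W \<subseteq> U E then y ^ card W else 0)"
      proof (intro sum.cong refl)
        fix W assume "W \<in> Pow M"
        then have "(W \<subseteq> U E) = (E \<inter> F W = {})" unfolding U_def F_def M_def by auto
        then show "y ^ card W * ind E W = (if W \<subseteq> U E then y ^ card W else 0)"
          unfolding ind_def by simp
      qed
      also have "\<dots> = (\<Sum>W\<in>{W \<in> Pow M. W \<subseteq> U E}. y ^ card W)"
        by (rule sum.inter_filter[symmetric]) (simp add: M_def)
      also have "{W \<in> Pow M. W \<subseteq> U E} = Pow (U E)" unfolding U_def M_def by auto
      finally show ?thesis by simp
    qed
    finally show ?thesis unfolding C_def
      using x by (simp add: mult_ac mult_left_mono)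
  qed
  have cardF: "card (F W) = m * card W" and subF: "F W \<subseteq> AP" if "W \<in> Pow M" for W
  proof -
    have "inj_on (\<lambda>(u, v). {u, v}) ({..<m} \<times> W)"
    proof (rule inj_onI, clarsimp)
      fix a b c d assume "a < m" "b \<in> W" "c < m" "d \<in> W" "{a, b} = {c, d}"
      moreover have "m \<le> b" "m \<le> d" using that \<open>b \<in> W\<close> \<open>d \<in> W\<close> unfolding M_def by auto
      ultimately show "a = c \<and> b = d" by (auto simp: doubleton_eq_iff)
    qed
    moreover have "finite W" using that unfolding M_def by (auto intro: finite_subset)
    ultimately show "card (F W) = m * card W" unfolding F_def
      by (simp add: card_image card_cartesian_product)
    show "F W \<subseteq> AP" unfolding F_def AP_def all_pairs_def using that unfolding M_def
      by fastforce
  qed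
  have "T n p = (\<Sum>E\<in>Pow AP. w E * real (complexity n E))"
    unfolding T_def w_def AP_def by simp
  also have "\<dots> \<le> (\<Sum>E\<in>Pow AP. w E * (C * (\<Sum>W\<in>Pow M. y ^ card W * ind E W)))"
    by (intro sum_mono mult_left_mono comp w0)
  also have "\<dots> = C * (\<Sum>W\<in>Pow M. y ^ card W * (\<Sum>E\<in>Pow AP. w E * ind E W))"
  proof -
    have "(\<Sum>E\<in>Pow AP. w E * (C * (\<Sum>W\<in>Pow M. y ^ card W * ind E W)))
        = (\<Sum>E\<in>Pow AP. \<Sum>W\<in>Pow M. C * (y ^ card W * (w E * ind E W)))"
      by (simp add: sum_distrib_left mult_ac)
    also have "\<dots> = (\<Sum>W\<in>Pow M. \<Sum>E\<in>Pow AP. C * (y ^ card W * (w E * ind E W)))"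
      by (rule sum.swap)
    also have "\<dots> = C * (\<Sum>W\<in>Pow M. y ^ card W * (\<Sum>E\<in>Pow AP. w E * ind E W))"
      by (simp add: sum_distrib_left)
    finally show ?thesis .
  qed
  also have "\<dots> = C * (\<Sum>W\<in>Pow M. (y * (1 - p) ^ m) ^ card W)"
  proof -
    have "(\<Sum>E\<in>Pow AP. w E * ind E W) = ((1 - p) ^ m) ^ card W" if "W \<in> Pow M" for W
      using prob_avoid[OF finAP subF[OF that], of p] cardF[OF that]
      unfolding w_def ind_def by (simp add: power_mult)
    then show ?thesis by (simp add: power_mult_distrib)
  qed
  also have "\<dots> = C * (1 + y * (1 - p) ^ m) ^ (n - m)"
    using pow_sum[of M] unfolding M_def by simp
  finally show ?thesis unfolding C_def y_def .
qed



lemma finite_all_pairs: "finite (all_pairs n)"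
proof -
  have "all_pairs n \<subseteq> (\<lambda>(i, j). {i, j}) ` ({..<n} \<times> {..<n})" unfolding all_pairs_def by auto
  then show ?thesis by (rule finite_subset) simp
qed

lemma T_ge_1:
  assumes "0 \<le> p" "p \<le> (1::real)"
  shows "1 \<le> T n p"
proof -
  have "1 = (\<Sum>E\<in>Pow (all_pairs n). p ^ card E * (1 - p) ^ (card (all_pairs n) - card E) * 1)"
    using prob_avoid[OF finite_all_pairs, where F="{}" and p=p] by simp
  also have "\<dots> \<le> T n p" unfolding T_def
    by (intro sum_mono mult_left_mono) (use complexity_bounds(1)[of n _ "{..<n}"] assms in
        \<open>auto simp: dominating_def\<close>)
  finally show ?thesis .
qed

lemma pow_exp_bound:
  assumes "0 \<le> p" "p \<le> (1::real)"
  shows "(1 - p) ^ m \<le> exp (- (p * real m))"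
proof -
  have "(1 - p) ^ m \<le> exp (- p) ^ m"
    by (intro power_mono) (use assms exp_ge_add_one_self[of "-p"] in auto)
  also have "\<dots> = exp (- (p * real m))" using exp_of_nat_mult[of m "-p"] by (simp add: mult.commute)
  finally show ?thesis .
qed

lemma partb:
  assumes c: "c \<ge> (20::real)"
  shows "\<forall>\<^sub>F n in sequentially. T n (c / real n) \<le> (2 - 0.01) ^ n"
proof -
  have ev1: "\<forall>\<^sub>F n in sequentially. real n \<ge> c" by real_asymp
  have ev2: "\<forall>\<^sub>F n in sequentially. (real n + 1) * (33/25)^4 * (231/130) ^ n \<le> (199/100) ^ n"
    by real_asymp
  show ?thesis using eventually_conj[OF ev1 ev2]
  proof (rule eventually_mono, clarify)
    fix n assume n: "c \<le> real n" and k: "(real n + 1) * (33/25)^4 * (231/130) ^ n \<le> (199/100) ^ n"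
    define p where "p = c / real n"
    define m where "m = (n + 4) div 5"
    have npos: "real n > 0" using n c by linarith
    have p: "0 \<le> p" "p \<le> 1" unfolding p_def using n npos c by auto
    have mn: "m \<le> n" unfolding m_def using npos by simp
    have m5: "real n \<le> 5 * real m" unfolding m_def by linarith
    have "T n p \<le> (real n + 1) * (1 + 1/4) ^ n * (1 / (1/4)) ^ m * (1 + (1 / (1/4) - 1) * (1 - p) ^ m) ^ (n - m)"
      by (rule T_bound[OF p _ _ mn]) auto
    also have "\<dots> = (real n + 1) * (5/4) ^ n * 4 ^ m * (1 + 3 * (1 - p) ^ m) ^ (n - m)" by simp
    also have "\<dots> \<le> (real n + 1) * (5/4) ^ n * ((33/25) ^ 4 * (33/25) ^ n) * (14/13) ^ n"
    proof (intro mult_mono)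
      have "((4::real) ^ m) ^ 5 \<le> ((33/25) ^ 4 * (33/25) ^ n) ^ 5"
      proof -
        have "((4::real) ^ m) ^ 5 = 4 ^ (5 * m)" by (simp add: power_mult[symmetric] mult.commute)
        also have "\<dots> \<le> 4 ^ (n + 4)" by (intro power_increasing) (auto simp: m_def)
        also have "\<dots> \<le> ((33/25) ^ 5) ^ (n + 4)" by (intro power_mono) (simp_all add: power_divide)
        also have "\<dots> = ((33/25) ^ 4 * (33/25) ^ n) ^ 5"
        proof -
          have "(33/25::real)^4 * (33/25)^n = (33/25)^(n+4)" by (simp add: power_add)
          moreover have "((33/25::real)^5)^(n+4) = ((33/25)^(n+4))^5" by (metis power_mult mult.commute)
          ultimately show ?thesis by simp
        qed
        finally show ?thesis .
      qed
      then show "(4::real) ^ m \<le> (33/25) ^ 4 * (33/25) ^ n"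
        by (subst (asm) power_mono_iff) auto
      have cm: "c * real m \<ge> 4 * real n" using mult_right_mono[OF c, of "real m"] m5 by linarith
      then have "p * real m \<ge> 4" unfolding p_def using npos by (simp add: field_simps)
      then have "exp (- (p * real m)) \<le> exp (- 4)" by simp
      then have "(1 - p) ^ m \<le> exp (- 4)" using pow_exp_bound[OF p, of m] by linarith
      also have "exp (- 4) \<le> (1 / 39 :: real)"
      proof -
        have "exp (1::real) \<ge> 5/2" using exp_lower_Taylor_quadratic[of 1] by simp
        then have "exp (1::real) ^ 4 \<ge> (5/2) ^ 4" by (intro power_mono) auto
        moreover have "(5/2::real) ^ 4 \<ge> 39" by (simp add: power_divide)
        moreover have "exp (4::real) = exp 1 ^ 4" using exp_of_nat_mult[of 4 "1::real"] by simp
        ultimately have "exp (4::real) \<ge> 39" by linarith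
        then have "inverse (exp (4::real)) \<le> inverse 39" by (intro le_imp_inverse_le) auto
        then show ?thesis by (simp add: exp_minus inverse_eq_divide)
      qed
      finally have "1 + 3 * (1 - p) ^ m \<le> 14/13" by simp
      then have "(1 + 3 * (1 - p) ^ m) ^ (n - m) \<le> (14/13) ^ (n - m)"
        by (intro power_mono) (use p in auto)
      also have "\<dots> \<le> (14/13) ^ n" by (intro power_increasing) auto
      finally show "(1 + 3 * (1 - p) ^ m) ^ (n - m) \<le> (14/13) ^ n" .
    qed (use p in auto)
    also have "\<dots> = (real n + 1) * (33/25)^4 * (231/130) ^ n"
    proof -
      have e: "(231/130::real) = (5/4) * (33/25) * (14/13)" by simp
      show ?thesis unfolding e power_mult_distrib by (simp only: mult_ac)
    qed
    finally show "T n (c / real n) \<le> (2 - 0.01) ^ n" using k unfolding p_def by simp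
  qed
qed

lemma parta:
  fixes p :: "nat \<Rightarrow> real"
  assumes p01: "\<forall>n. 0 \<le> p n \<and> p n \<le> 1"
    and lim: "filterlim (\<lambda>n. real n * p n) at_top sequentially"
  shows "(\<lambda>n. log 2 (T n (p n))) \<in> o(\<lambda>n. real n)"
proof (rule landau_o.smallI)
  fix \<epsilon> :: real assume \<epsilon>: "0 < \<epsilon>"
  define x where "x = min (1/2) (\<epsilon> * ln 2 / 4)"
  have x0: "0 < x" "x \<le> 1/2" "x \<le> \<epsilon> * ln 2 / 4" unfolding x_def using \<epsilon> by auto
  define L where "L = ln (1 / x)"
  have Lx: "L = - ln x" unfolding L_def using x0 by (simp add: ln_div)
  have L: "L \<ge> 1/2" using ln_le_minus_one[OF x0(1)] x0(2) Lx by linarith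
  define \<beta> where "\<beta> = x / L"
  have \<beta>0: "0 < \<beta>" unfolding \<beta>_def using x0 L by auto
  have \<beta>1: "\<beta> \<le> 1" unfolding \<beta>_def using x0 L by (simp add: divide_le_eq)
  have \<beta>L: "\<beta> * L = x" unfolding \<beta>_def using L by simp
  have o: "(\<lambda>n. ln (real n + 1)) \<in> o(\<lambda>n. real n)" by real_asymp
  have ev1: "\<forall>\<^sub>F n in sequentially. ln (real n + 1) \<le> x * real n"
    using landau_o.smallD[OF o x0(1)] by (rule eventually_mono) auto
  have ev2: "\<forall>\<^sub>F n in sequentially. (2 * L + 1) / \<beta> \<le> real n * p n"
    using lim unfolding filterlim_at_top by blast
  show "\<forall>\<^sub>F n in sequentially. norm (log 2 (T n (p n))) \<le> \<epsilon> * norm (real n)"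
    using eventually_conj[OF ev1 ev2]
  proof (rule eventually_mono, clarify)
    fix n assume h1: "ln (real n + 1) \<le> x * real n" and h2: "(2 * L + 1) / \<beta> \<le> real n * p n"
    define pn where "pn = p n"
    have pn: "0 \<le> pn" "pn \<le> 1" unfolding pn_def using p01 by auto
    define m where "m = nat \<lfloor>\<beta> * real n\<rfloor>"
    have bn0: "0 \<le> \<beta> * real n" using \<beta>0 by simp
    have rm1: "real m \<le> \<beta> * real n" unfolding m_def using bn0 by linarith
    have rm2: "real m \<ge> \<beta> * real n - 1" unfolding m_def using bn0 by linarith
    have "\<beta> * real n \<le> real n" using mult_right_mono[OF \<beta>1, of "real n"] by simp
    then have mn: "m \<le> n" using rm1 by linarith
    define q where "q = (1 - pn) ^ m"
    have q0: "0 \<le> q" unfolding q_def using pn by simp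
    have "pn * real m \<ge> pn * (\<beta> * real n - 1)" using rm2 pn by (intro mult_left_mono) auto
    moreover have "\<beta> * (real n * pn) \<ge> 2 * L + 1"
      using h2 \<beta>0 unfolding pn_def by (simp add: divide_le_eq mult.commute)
    ultimately have pm: "pn * real m \<ge> 2 * L" using pn by (simp add: algebra_simps)
    have "q \<le> exp (- (pn * real m))" unfolding q_def by (rule pow_exp_bound[OF pn])
    also have "\<dots> \<le> exp (- (2 * L))" using pm by simp
    also have "exp (- (2 * L)) = x ^ 2"
    proof -
      have "exp (- (2 * L)) = exp (of_nat 2 * ln x)" unfolding Lx by simp
      also have "\<dots> = exp (ln x) ^ 2" by (rule exp_of_nat_mult)
      finally show ?thesis using x0 by simp
    qed
    finally have qx: "q \<le> x ^ 2" .
    define y where "y = 1 / x - 1"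
    have y0: "0 \<le> y" unfolding y_def using x0 by (simp add: field_simps)
    have y1: "y \<le> 1 / x" unfolding y_def by simp
    have Tb: "T n pn \<le> (real n + 1) * (1 + x) ^ n * (1 / x) ^ m * (1 + y * q) ^ (n - m)"
      unfolding y_def q_def by (rule T_bound[OF pn x0(1) _ mn]) (use x0 in auto)
    have f1: "real n + 1 \<le> exp (x * real n)"
      using h1 by (metis exp_le_cancel_iff exp_ln of_nat_0_le_iff add_nonneg_pos zero_less_one)
    have f2: "(1 + x) ^ n \<le> exp (x * real n)"
    proof -
      have "(1 + x) ^ n \<le> exp x ^ n" by (intro power_mono) (use x0 exp_ge_add_one_self[of x] in auto)
      also have "\<dots> = exp (x * real n)" using exp_of_nat_mult[of n x] by (simp add: mult.commute)
      finally show ?thesis .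
    qed
    have f3: "(1 / x) ^ m \<le> exp (x * real n)"
    proof -
      have "(1 / x) ^ m = exp L ^ m" unfolding L_def using x0 by simp
      also have "\<dots> = exp (real m * L)" using exp_of_nat_mult[of m L] by simp
      also have "\<dots> \<le> exp (\<beta> * real n * L)" using rm1 L by (intro exp_mono mult_right_mono) auto
      also have "\<beta> * real n * L = x * real n" using \<beta>L by (simp add: mult_ac)
      finally show ?thesis .
    qed
    have f4: "(1 + y * q) ^ (n - m) \<le> exp (x * real n)"
    proof -
      have "(1 + y * q) ^ (n - m) \<le> exp (y * q) ^ (n - m)"
        by (intro power_mono) (use y0 q0 exp_ge_add_one_self[of "y * q"] in auto)
      also have "\<dots> = exp (real (n - m) * (y * q))" using exp_of_nat_mult[of "n - m" "y * q"] by simp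
      also have "real (n - m) * (y * q) \<le> real n * (1 / x * x ^ 2)"
        by (intro mult_mono) (use y0 q0 y1 qx x0 in \<open>auto intro: mult_mono\<close>)
      also have "real n * (1 / x * x ^ 2) = x * real n" using x0 by (simp add: power2_eq_square)
      finally show ?thesis by simp
    qed
    have "T n pn \<le> exp (x * real n) * exp (x * real n) * exp (x * real n) * exp (x * real n)"
      using Tb f1 f2 f3 f4 by (smt (verit) mult_mono exp_gt_zero zero_le_power q0 y0 x0(1)
          mult_nonneg_nonneg divide_nonneg_nonneg)
    also have "\<dots> = exp (4 * x * real n)" by (simp add: exp_add[symmetric])
    finally have Tup: "T n pn \<le> exp (4 * x * real n)" .
    have T1: "1 \<le> T n pn" by (rule T_ge_1[OF pn])
    have lnT: "ln (T n pn) \<le> 4 * x * real n" using Tup T1 by (metis ln_exp ln_mono less_le_trans zero_less_one)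
    have lnT0: "0 \<le> ln (T n pn)" using T1 by simp
    have "log 2 (T n pn) = ln (T n pn) / ln 2" by (simp add: log_def)
    moreover have "ln (T n pn) / ln 2 \<le> \<epsilon> * real n"
    proof -
      have "4 * x * real n \<le> \<epsilon> * ln 2 * real n" using x0(3) by (intro mult_right_mono) auto
      then have "ln (T n pn) \<le> \<epsilon> * real n * ln 2" using lnT by (simp add: mult_ac)
      then show ?thesis by (simp add: divide_le_eq)
    qed
    ultimately show "norm (log 2 (T n (p n))) \<le> \<epsilon> * norm (real n)"
      using lnT0 unfolding pn_def by simp
  qed
qed


theorem theorem1:
  shows "(\<forall>p :: nat \<Rightarrow> real. (\<forall>n. 0 \<le> p n \<and> p n \<le> 1) \<longrightarrow>
            filterlim (\<lambda>n. real n * p n) at_top sequentially \<longrightarrow>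
            (\<lambda>n. log 2 (T n (p n))) \<in> o(\<lambda>n. real n))
       \<and> (\<forall>c :: real. c \<ge> 20 \<longrightarrow>
            (\<exists>\<epsilon> :: real. \<epsilon> \<ge> 0.01 \<and>
               (\<forall>\<^sub>F n in sequentially. T n (c / real n) \<le> (2 - \<epsilon>) ^ n)))"
proof (intro conjI allI impI)
  fix p :: "nat \<Rightarrow> real"
  assume "\<forall>n. 0 \<le> p n \<and> p n \<le> 1" "filterlim (\<lambda>n. real n * p n) at_top sequentially"
  then show "(\<lambda>n. log 2 (T n (p n))) \<in> o(\<lambda>n. real n)" by (rule parta)
next
  fix c :: real assume "c \<ge> 20"
  then show "\<exists>\<epsilon> :: real. \<epsilon> \<ge> 0.01 \<and> (\<forall>\<^sub>F n in sequentially. T n (c / real n) \<le> (2 - \<epsilon>) ^ n)"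
    using partb by (intro exI[of _ "0.01"]) auto
qed

end
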